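(* Let $\lambda\ge1$, $\mu\ge0$, let $\varphi(z)=1+B_1z+B_2z^2+\cdots$ be as in the context, and let $f(z)=z+\sum_{n\ge2}a_nz^n\in\mathcal N^{\mu,\lambda}_\Sigma(\varphi)$. Put $x=(B_1-B_2)/B_1^2$. Then $$|a_3|\le\begin{cases}\dfrac{B_1}{2\lambda+\mu}, & x\in\Big(-\infty,\dfrac{-(3+\mu)(2\lambda+\mu)}{2(\lambda+\mu)^2}\Big]\cup\Big[\dfrac{(1-\mu)(2\lambda+\mu)}{2(\lambda+\mu)^2},\infty\Big),\\[3mm]\dfrac{2B_1^3}{|(2\lambda+\mu)(1+\mu)B_1^2+2(B_1-B_2)(\lambda+\mu)^2|}, & x\in\Big[\dfrac{-(3+\mu)(2\lambda+\mu)}{2(\lambda+\mu)^2},\dfrac{-(1+\mu)(2\lambda+\mu)}{2(\lambda+\mu)^2}\Big)\cup\Big(\dfrac{-(1+\mu)(2\lambda+\mu)}{2(\lambda+\mu)^2},\dfrac{(1-\mu)(2\lambda+\mu)}{2(\lambda+\mu)^2}\Big].\end{cases}$$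
   Context: Let $\mathbb U=\{z\in\mathbb C:|z|<1\}$ and let $\mathcal A$ be the class of functions $f(z)=z+\sum_{n\ge2}a_nz^n$ analytic in $\mathbb U$. $\Sigma$ denotes the class of bi-univalent functions: $f\in\mathcal A$ univalent in $\mathbb U$ such that the inverse $f^{-1}$ (defined near $0$) extends to an analytic univalent function on $\mathbb U$; this extension is denoted $g=f^{-1}$. For $F,G$ analytic in $\mathbb U$, $F\prec G$ means there is an analytic $w:\mathbb U\to\mathbb U$ with $w(0)=0$ and $F=G\circ w$. Throughout, $\varphi$ is analytic and univalent in $\mathbb U$ with $\Re\varphi>0$, $\varphi(0)=1$, $\varphi'(0)>0$, $\varphi(\mathbb U)$ starlike with respect to $1$ and symmetric with respect to the real axis, and $\varphi(z)=1+B_1z+B_2z^2+\cdots$ with all $B_j$ real and $B_1>0$. For $\lambda\ge1$, $\mu\ge0$, $\mathcal N^{\mu,\lambda}_\Sigma(\varphi)$ is the set of $f\in\Sigma$ with $(1-\lambda)(f(z)/z)^{\mu}+\lambda f'(z)(f(z)/z)^{\mu-1}\prec\varphi(z)$ and $(1-\lambda)(g(w)/w)^{\mu}+\lambda g'(w)(g(w)/w)^{\mu-1}\prec\varphi(w)$, where $g=f^{-1}$ and powers are principal branches equal to $1$ at the origin. *)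

theory Defs
  imports "HOL-Analysis.Analysis"
begin

abbreviation UD :: "complex set" where "UD \<equiv> ball 0 1"

definition taylor_coeff :: "(complex \<Rightarrow> complex) \<Rightarrow> nat \<Rightarrow> complex" where
  "taylor_coeff f n = (deriv ^^ n) f 0 / of_nat (fact n)"

definition subordinate :: "(complex \<Rightarrow> complex) \<Rightarrow> (complex \<Rightarrow> complex) \<Rightarrow> bool" where
  "subordinate F G \<longleftrightarrow> (\<exists>w. w holomorphic_on UD \<and> w ` UD \<subseteq> UD \<and> w 0 = 0 \<and>
      (\<forall>z\<in>UD. F z = G (w z)))"

definition normalized_univalent :: "(complex \<Rightarrow> complex) \<Rightarrow> bool" where
  "normalized_univalent f \<longleftrightarrow> f holomorphic_on UD \<and> inj_on f UD \<and> f 0 = 0 \<and> deriv f 0 = 1"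

definition bi_univalent_inverse :: "(complex \<Rightarrow> complex) \<Rightarrow> (complex \<Rightarrow> complex) \<Rightarrow> bool" where
  "bi_univalent_inverse f g \<longleftrightarrow> normalized_univalent f \<and>
      g holomorphic_on UD \<and> inj_on g UD \<and>
      (\<exists>r>0. \<forall>w\<in>ball 0 r. g w \<in> UD \<and> f (g w) = w)"

definition bi_univalent :: "(complex \<Rightarrow> complex) \<Rightarrow> bool" where
  "bi_univalent f \<longleftrightarrow> (\<exists>g. bi_univalent_inverse f g)"

text \<open>f(z)/z, with its removable singularity at 0 filled by f'(0) = 1.\<close>
definition quot0 :: "(complex \<Rightarrow> complex) \<Rightarrow> complex \<Rightarrow> complex" where
  "quot0 f z = (if z = 0 then 1 else f z / z)"

text \<open>(1-lam)(f(z)/z)^mu + lam f'(z) (f(z)/z)^(mu-1), principal branches.\<close>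
definition N_operator :: "real \<Rightarrow> real \<Rightarrow> (complex \<Rightarrow> complex) \<Rightarrow> complex \<Rightarrow> complex" where
  "N_operator mu lam f z =
     (1 - of_real lam) * quot0 f z powr of_real mu
     + of_real lam * deriv f z * quot0 f z powr of_real (mu - 1)"

definition admissible_phi :: "(complex \<Rightarrow> complex) \<Rightarrow> bool" where
  "admissible_phi \<phi> \<longleftrightarrow> \<phi> holomorphic_on UD \<and> inj_on \<phi> UD \<and>
     (\<forall>z\<in>UD. Re (\<phi> z) > 0) \<and> \<phi> 0 = 1 \<and>
     deriv \<phi> 0 \<in> \<real> \<and> Re (deriv \<phi> 0) > 0 \<and>
     (\<forall>u\<in>\<phi> ` UD. closed_segment 1 u \<subseteq> \<phi> ` UD) \<and>
     (\<forall>u\<in>\<phi> ` UD. cnj u \<in> \<phi> ` UD) \<and>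
     (\<forall>j. taylor_coeff \<phi> j \<in> \<real>) \<and> Re (taylor_coeff \<phi> 1) > 0"

definition N_class :: "real \<Rightarrow> real \<Rightarrow> (complex \<Rightarrow> complex) \<Rightarrow> (complex \<Rightarrow> complex) \<Rightarrow> bool" where
  "N_class mu lam \<phi> f \<longleftrightarrow> bi_univalent f \<and>
     (\<forall>g. bi_univalent_inverse f g \<longrightarrow>
        subordinate (N_operator mu lam f) \<phi> \<and> subordinate (N_operator mu lam g) \<phi>)"

end

theory Submission
  imports Defs "HOL-Complex_Analysis.Complex_Analysis"
begin


lemma compose_nth123:
  fixes F G :: "'a::field fps"
  assumes "fps_nth G 0 = 0"
  shows "fps_nth (F oo G) 1 = fps_nth F 1 * fps_nth G 1"
    and "fps_nth (F oo G) 2 = fps_nth F 1 * fps_nth G 2 + fps_nth F 2 * fps_nth G 1 ^ 2"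
    and "fps_nth (F oo G) 3 = fps_nth F 1 * fps_nth G 3 + 2 * fps_nth F 2 * fps_nth G 1 * fps_nth G 2 + fps_nth F 3 * fps_nth G 1 ^ 3"
proof -
  note ss = fps_mult_nth atLeast0AtMost numeral_3_eq_3 numeral_2_eq_2 sum.atMost_Suc assms
  have g3: "G^3 = G * (G * G)" by (simp add: power3_eq_cube mult.assoc)
  show "fps_nth (F oo G) 1 = fps_nth F 1 * fps_nth G 1"
    by (simp add: fps_compose_nth ss)
  show "fps_nth (F oo G) 2 = fps_nth F 1 * fps_nth G 2 + fps_nth F 2 * fps_nth G 1 ^ 2"
    by (simp add: fps_compose_nth ss power2_eq_square)
  show "fps_nth (F oo G) 3 = fps_nth F 1 * fps_nth G 3 + 2 * fps_nth F 2 * fps_nth G 1 * fps_nth G 2 + fps_nth F 3 * fps_nth G 1 ^ 3"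
    by (simp add: fps_compose_nth ss power2_eq_square g3 algebra_simps)
qed

lemma gchoose12: "(a::complex) gchoose 1 = a" "a gchoose 2 = a * (a - 1) / 2"
   "a gchoose Suc 0 = a" "a gchoose Suc (Suc 0) = a * (a - 1) / 2"
  by (simp_all add: gbinomial_Suc numeral_2_eq_2 atLeast0AtMost)

lemma N_expansion:
  fixes h :: "complex \<Rightarrow> complex" and H :: "complex fps"
  assumes hH: "h has_fps_expansion H" and H0: "fps_nth H 0 = 0" and H1: "fps_nth H 1 = 1"
  shows "\<exists>N. N_operator mu lam h has_fps_expansion N \<and>
     fps_nth N 1 = of_real (lam + mu) * fps_nth H 2 \<and>
     fps_nth N 2 = of_real (2*lam + mu) * (fps_nth H 3 + of_real ((mu - 1)/2) * fps_nth H 2 ^ 2)"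
proof -
  have H1': "fps_nth H (Suc 0) = 1" using H1 by simp
  have "H \<noteq> 0" using H1 by auto
  then have sd: "1 \<le> subdegree H" using H0 by (intro subdegree_geI) auto
  have "(\<lambda>x. if x = 0 then fps_nth H 1 else h x / x ^ 1) has_fps_expansion fps_shift 1 H"
    by (rule has_fps_expansion_shift[OF hH sd]) simp
  also have "(\<lambda>x. if x = 0 then fps_nth H 1 else h x / x ^ 1) = quot0 h"
    by (rule ext) (simp add: quot0_def H1 H1')
  finally have Q: "quot0 h has_fps_expansion fps_shift 1 H" .
  define D where "D = fps_shift 1 H - 1"
  have QD: "(\<lambda>z. quot0 h z - 1) has_fps_expansion D"
    unfolding D_def by (intro has_fps_expansion_diff Q has_fps_expansion_1)
  have D0: "fps_nth D 0 = 0" and D1: "fps_nth D 1 = fps_nth H 2" and D2: "fps_nth D 2 = fps_nth H 3"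
    by (simp_all add: D_def H1 H1' numeral_3_eq_3 numeral_2_eq_2)
  have P: "(\<lambda>z. quot0 h z powr a) has_fps_expansion (fps_binomial a oo D)" for a
  proof -
    have "((\<lambda>x. (1 + x) powr a) \<circ> (\<lambda>z. quot0 h z - 1)) has_fps_expansion (fps_binomial a oo D)"
      by (intro has_fps_expansion_compose has_fps_expansion_binomial_complex QD D0)
    also have "((\<lambda>x. (1 + x) powr a) \<circ> (\<lambda>z. quot0 h z - 1)) = (\<lambda>z. quot0 h z powr a)"
      by (auto simp: o_def)
    finally show ?thesis .
  qed
  have c1: "fps_nth (fps_binomial a oo D) (Suc 0) = a * fps_nth H (Suc (Suc 0))" for a
    using compose_nth123(1)[OF D0, of "fps_binomial a"] D1 by (simp add: gchoose12 numeral_2_eq_2)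
  have c2: "fps_nth (fps_binomial a oo D) (Suc (Suc 0)) = a * fps_nth H (Suc (Suc (Suc 0))) + a * (a - 1) / 2 * fps_nth H (Suc (Suc 0)) ^ 2" for a
    using compose_nth123(2)[OF D0, of "fps_binomial a"] D1 D2 by (simp add: gchoose12 numeral_2_eq_2 numeral_3_eq_3)
  define N where "N = fps_const (1 - of_real lam) * (fps_binomial (of_real mu) oo D)
     + fps_const (of_real lam) * fps_deriv H * (fps_binomial (of_real (mu - 1)) oo D)"
  have "N_operator mu lam h has_fps_expansion N"
    unfolding N_def N_operator_def
    by (intro has_fps_expansion_add has_fps_expansion_cmult_left has_fps_expansion_mult
        has_fps_expansion_deriv hH P)
  moreover have "fps_nth N 1 = of_real (lam + mu) * fps_nth H 2"
    unfolding N_def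
    by (simp add: c1 c2 fps_mult_nth atLeast0AtMost numeral_2_eq_2 sum.atMost_Suc H1 H1' gchoose12 algebra_simps)
  moreover have "fps_nth N 2 = of_real (2*lam + mu) * (fps_nth H 3 + of_real ((mu - 1)/2) * fps_nth H 2 ^ 2)"
    unfolding N_def
    by (simp add: c1 c2 fps_mult_nth atLeast0AtMost numeral_3_eq_3 numeral_2_eq_2 sum.atMost_Suc H1 H1' gchoose12 algebra_simps power2_eq_square) (simp add: field_simps)
  ultimately show ?thesis by blast
qed



lemma fps_exp_unique:
  fixes f :: "complex \<Rightarrow> complex"
  shows "f has_fps_expansion F \<Longrightarrow> f has_fps_expansion G \<Longrightarrow> F = G"
  by (simp add: fps_eq_iff fps_nth_fps_expansion)

lemma fps_exp_transfer:
  assumes "f has_fps_expansion F" "eventually (\<lambda>z. f z = g z) (nhds 0)"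
  shows "g has_fps_expansion F"
proof -
  have "f has_fps_expansion F \<longleftrightarrow> g has_fps_expansion F"
    by (rule has_fps_expansion_cong[OF assms(2) refl])
  thus ?thesis using assms(1) by simp
qed

lemma Moebius_deriv:
  fixes a :: complex assumes "norm a < 1"
  shows "((\<lambda>u. (u - a) / (1 - cnj a * u)) has_field_derivative 1 / (1 - cnj a * a)) (at a)"
proof -
  have e: "1 - cnj a * a = of_real (1 - norm a ^ 2)"
    using complex_norm_square[of a] by (simp add: mult.commute)
  have "norm a ^ 2 < 1" using assms by (simp add: power_less_one_iff abs_square_less_1)
  hence nz: "1 - cnj a * a \<noteq> 0" unfolding e of_real_eq_0_iff by simp
  have d1: "((\<lambda>x. x - a) has_field_derivative 1) (at a)"
    using DERIV_diff[OF DERIV_ident DERIV_const, of a a] by simp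
  have "((\<lambda>u. 1 - cnj a * u) has_field_derivative 0 - cnj a * 1) (at a)"
    by (intro DERIV_diff DERIV_const DERIV_cmult DERIV_ident)
  hence d2: "((\<lambda>u. 1 - cnj a * u) has_field_derivative - cnj a) (at a)" by simp
  have "((\<lambda>u. (u - a) / (1 - cnj a * u)) has_field_derivative
     (1 * (1 - cnj a * a) - (a - a) * (- cnj a)) / ((1 - cnj a * a) * (1 - cnj a * a))) (at a)"
    by (rule DERIV_divide[OF d1 d2 nz])
  then show ?thesis using nz by simp
qed

lemma schwarz_pick_coeff:
  fixes w :: "complex \<Rightarrow> complex"
  assumes holw: "w holomorphic_on UD" and wU: "w ` UD \<subseteq> UD" and w0: "w 0 = 0"
    and wW: "w has_fps_expansion W"
  shows "norm (fps_nth W 2) \<le> 1 - norm (fps_nth W 1) ^ 2"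
proof -
  obtain h where holh: "h holomorphic_on UD" and wh: "\<And>z. norm z < 1 \<Longrightarrow> w z = z * h z"
     and dh: "deriv w 0 = h 0"
    using Schwarz3[OF holw w0] by blast
  have no: "\<And>z. norm z < 1 \<Longrightarrow> norm (w z) < 1" using wU by (force simp: image_subset_iff)
  have n0: "norm (0::complex) < 1" by simp
  note SL2 = Schwarz_Lemma(2)[OF holw w0 no n0]
  note SL3 = Schwarz_Lemma(3)[OF holw w0 no n0]
  have hH: "h has_fps_expansion fps_expansion h 0"
    using holh by (intro has_fps_expansion_fps_expansion) auto
  have "(\<lambda>z. z * h z) has_fps_expansion fps_X * fps_expansion h 0"
    by (intro has_fps_expansion_mult has_fps_expansion_fps_X hH)
  moreover have "eventually (\<lambda>z. z * h z = w z) (nhds 0)"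
    using eventually_nhds_in_open[of UD 0] by (auto elim!: eventually_mono simp: wh)
  ultimately have "w has_fps_expansion fps_X * fps_expansion h 0"
    by (rule fps_exp_transfer)
  hence WE: "W = fps_X * fps_expansion h 0" using wW fps_exp_unique by blast
  have W1: "fps_nth W 1 = h 0" and W2: "fps_nth W 2 = deriv h 0"
    by (simp_all add: WE fps_expansion_def numeral_2_eq_2)
  have hle: "norm (h z) \<le> 1" if "norm z < 1" for z
  proof (cases "z = 0")
    case True
    then show ?thesis using SL2 dh by simp
  next
    case False
    have "norm (z * h z) \<le> norm z" using Schwarz_Lemma(1)[OF holw w0 no that] wh[OF that] by simp
    then show ?thesis using False by (simp add: norm_mult)
  qed
  define a where "a = h 0"
  show ?thesis
  proof (cases "norm a = 1")
    case True
    then obtain \<alpha> where al: "\<And>z. norm z < 1 \<Longrightarrow> w z = \<alpha> * z" "norm \<alpha> = 1"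
      using SL3 dh a_def by auto
    have "(\<lambda>z. \<alpha> * z) has_fps_expansion fps_const \<alpha> * fps_X"
      by (intro has_fps_expansion_cmult_left has_fps_expansion_fps_X)
    moreover have "eventually (\<lambda>z. \<alpha> * z = w z) (nhds 0)"
      using eventually_nhds_in_open[of UD 0] by (auto elim!: eventually_mono simp: al)
    ultimately have "w has_fps_expansion fps_const \<alpha> * fps_X"
      by (rule fps_exp_transfer)
    hence "W = fps_const \<alpha> * fps_X" using wW fps_exp_unique by blast
    then show ?thesis using al(2) by (simp add: numeral_2_eq_2)
  next
    case False
    hence a1: "norm a < 1" using hle[of 0] a_def by simp
    have hlt: "norm (h z) < 1" if zlt: "norm z < 1" for z
    proof (cases "z = 0")
      case True then show ?thesis using a1 a_def by simp
    next
      case z: False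
      show ?thesis
      proof (rule ccontr)
        assume "\<not> norm (h z) < 1"
        hence "norm (h z) = 1" using hle[OF zlt] by simp
        hence wz: "norm (w z) = norm z" using wh[OF zlt] by (simp add: norm_mult)
        have "(\<exists>z. norm z < 1 \<and> z \<noteq> 0 \<and> norm (w z) = norm z) \<or> norm (deriv w 0) = 1"
          using zlt z wz by blast
        hence "\<exists>\<alpha>. (\<forall>z. norm z < 1 \<longrightarrow> w z = \<alpha> * z) \<and> norm \<alpha> = 1"
          using SL3 by metis
        then obtain \<alpha> where al: "\<And>z. norm z < 1 \<Longrightarrow> w z = \<alpha> * z" "norm \<alpha> = 1"
          by blast
        have "h 0 = deriv w 0" using dh by simp
        also have "deriv w 0 = \<alpha>"
        proof -
          have "((\<lambda>z. \<alpha> * z) has_field_derivative \<alpha>) (at 0)"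
            by (rule derivative_eq_intros refl | simp)+
          moreover have "eventually (\<lambda>z. \<alpha> * z = w z) (nhds 0)"
            using eventually_nhds_in_open[of UD 0] by (auto elim!: eventually_mono simp: al)
          ultimately have "(w has_field_derivative \<alpha>) (at 0)"
            using DERIV_cong_ev[where f="\<lambda>z. \<alpha> * z" and g=w and x=0 and y=0 and u=\<alpha> and v=\<alpha>] by simp
          thus ?thesis by (rule DERIV_imp_deriv)
        qed
        finally show False using a1 a_def al(2) by simp
      qed
    qed
    define M where "M = (\<lambda>u. (u - a) / (1 - cnj a * u))"
    have MM: "M = Moebius_function 0 a" by (simp add: M_def Moebius_function_simple fun_eq_iff)
    have holk: "(M \<circ> h) holomorphic_on UD"
      by (rule holomorphic_on_compose[OF holh]) (use hlt Moebius_function_holomorphic[OF a1, of 0] MM in \<open>auto intro: holomorphic_on_subset\<close>)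
    have k0: "(M \<circ> h) 0 = 0" by (simp add: M_def a_def)
    have klt: "norm ((M \<circ> h) z) < 1" if "norm z < 1" for z
      using Moebius_function_norm_lt_1[OF a1 hlt[OF that]] MM by simp
    have dk: "norm (deriv (M \<circ> h) 0) \<le> 1"
      using Schwarz_Lemma(2)[OF holk k0 klt, of 0] by (simp add: o_def)
    have hd: "(h has_field_derivative deriv h 0) (at 0)"
      using holh by (intro holomorphic_derivI[of _ UD]) auto
    have "(M \<circ> h has_field_derivative (1 / (1 - cnj a * a)) * deriv h 0) (at 0)"
      by (rule DERIV_chain[OF _ hd]) (use Moebius_deriv[OF a1] a_def M_def in simp)
    hence "deriv (M \<circ> h) 0 = deriv h 0 / (1 - cnj a * a)" by (simp add: DERIV_imp_deriv)
    also have ca: "1 - cnj a * a = of_real (1 - norm a ^ 2)"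
      using complex_norm_square[of a] by (simp add: mult.commute)
    finally have dkeq: "deriv (M \<circ> h) 0 = deriv h 0 / of_real (1 - norm a ^ 2)" .
    have pos: "1 - norm a ^ 2 > 0" using a1 by (simp add: power_less_one_iff abs_square_less_1)
    have nn: "norm (complex_of_real (1 - norm a ^ 2)) = 1 - norm a ^ 2"
      by (simp only: norm_of_real abs_of_pos[OF pos])
    have "norm (deriv h 0) / (1 - norm a ^ 2) \<le> 1"
      using dk unfolding dkeq norm_divide nn .
    hence "norm (deriv h 0) \<le> 1 - norm a ^ 2" using pos by (simp add: divide_le_eq)
    thus ?thesis using W1 W2 a_def by simp
  qed
qed



lemma bound_core:
  fixes A3 P Q :: complex and al be :: real
  assumes "norm P \<le> 1" "norm Q \<le> 1" "A3 = of_real al * (P + Q) + of_real be * (P - Q)"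
  shows "norm A3 \<le> 2 * max \<bar>al\<bar> \<bar>be\<bar>"
proof -
  have "A3 = of_real (al + be) * P + of_real (al - be) * Q"
    using assms(3) by (simp add: algebra_simps)
  hence "norm A3 \<le> \<bar>al + be\<bar> * norm P + \<bar>al - be\<bar> * norm Q"
    by (metis norm_triangle_ineq norm_mult norm_of_real)
  also have "\<dots> \<le> \<bar>al + be\<bar> + \<bar>al - be\<bar>"
    using assms(1,2) by (intro add_mono) (auto intro: mult_left_le)
  also have "\<dots> = 2 * max \<bar>al\<bar> \<bar>be\<bar>" by (auto simp: max_def abs_if)
  finally show ?thesis .
qed

lemma final_bound:
  fixes A2 A3 w1 w2 v2 :: complex and lam mu B1 B2 :: real
  assumes lam: "lam \<ge> 1" and mu: "mu \<ge> 0" and B1: "B1 > 0"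
    and E1: "of_real (lam + mu) * A2 = of_real B1 * w1"
    and E2: "of_real (2*lam + mu) * (A3 + of_real ((mu - 1)/2) * A2^2) = of_real B1 * w2 + of_real B2 * w1^2"
    and E4: "of_real (2*lam + mu) * ((2*A2^2 - A3) + of_real ((mu - 1)/2) * (-A2)^2) = of_real B1 * v2 + of_real B2 * (-w1)^2"
    and n1: "norm w2 \<le> 1 - norm w1 ^ 2" and n2: "norm v2 \<le> 1 - norm w1 ^ 2"
  defines "x \<equiv> (B1 - B2) / B1 ^ 2"
  defines "c \<equiv> (2 * lam + mu) / (2 * (lam + mu) ^ 2)"
  shows "(x \<le> - (3 + mu) * c \<or> x \<ge> (1 - mu) * c \<longrightarrow>
            norm A3 \<le> B1 / (2 * lam + mu))
       \<and> ((- (3 + mu) * c \<le> x \<and> x < - (1 + mu) * c) \<or> (- (1 + mu) * c < x \<and> x \<le> (1 - mu) * c) \<longrightarrow>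
            norm A3 \<le>
              2 * B1 ^ 3 / \<bar>(2 * lam + mu) * (1 + mu) * B1 ^ 2 + 2 * (B1 - B2) * (lam + mu) ^ 2\<bar>)"
proof -
  define P where "P = w2 + w1^2"
  define Q where "Q = v2 + w1^2"
  have nP: "norm P \<le> 1" unfolding P_def
    using norm_triangle_ineq[of w2 "w1^2"] n1 by (simp add: norm_power)
  have nQ: "norm Q \<le> 1" unfolding Q_def
    using norm_triangle_ineq[of v2 "w1^2"] n2 by (simp add: norm_power)
  define s where "s = 2 * lam + mu"
  have s: "s > 0" using lam mu by (simp add: s_def)
  define D where "D = (2 * lam + mu) * (1 + mu) * B1 ^ 2 + 2 * (B1 - B2) * (lam + mu) ^ 2"
  define be where "be = B1 / (2 * s)"
  have k1: "of_real s * (2 * A3 - 2 * A2^2) = of_real B1 * (P - Q)"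
    using E2 E4 unfolding P_def Q_def s_def of_real_add of_real_mult of_real_diff of_real_divide of_real_numeral of_real_1 by algebra
  have k1': "A3 = A2^2 + of_real be * (P - Q)"
  proof -
    have "of_real s \<noteq> (0::complex)" using s by simp
    with k1 show ?thesis unfolding be_def by (simp add: field_simps)
  qed
  have hm: "2 * (of_real ((mu-1)/2)::complex) = of_real mu - 1" by simp
  have E24: "of_real s * of_real (1 + mu) * A2^2 = of_real B1 * (w2 + v2) + 2 * of_real B2 * w1^2"
    using E2 E4 hm unfolding s_def of_real_add of_real_mult of_real_numeral of_real_1 by algebra
  have k2: "of_real D * A2^2 = of_real (B1^3) * (P + Q)"
    using E1 E24 unfolding D_def P_def Q_def s_def of_real_add of_real_mult of_real_diff of_real_numeral of_real_1 of_real_power by algebra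
  define K where "K = 2 * (lam + mu) ^ 2"
  have K: "K > 0" using lam mu by (simp add: K_def)
  have Kc: "K * c = s" using K unfolding K_def c_def s_def by (simp add: field_simps)
  define E where "E = s * (1 + mu) + K * x"
  have DE: "D = B1^2 * E"
    using B1 unfolding D_def E_def K_def x_def s_def by (simp add: field_simps)
  have A3eq: "D \<noteq> 0 \<Longrightarrow> A3 = of_real (B1^3 / D) * (P + Q) + of_real be * (P - Q)"
  proof -
    assume "D \<noteq> 0"
    hence "A2^2 = of_real (B1^3 / D) * (P + Q)" using k2
      by (simp add: field_simps)
    thus ?thesis using k1' by simp
  qed
  have al: "\<bar>B1^3 / D\<bar> = B1 / \<bar>E\<bar>" using B1 unfolding DE
    by (simp add: abs_mult power2_eq_square power3_eq_cube)
  have bepos: "be > 0" using B1 s by (simp add: be_def)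
  have xK: "x \<le> y * c \<longleftrightarrow> K * x \<le> y * s" "y * c \<le> x \<longleftrightarrow> y * s \<le> K * x"
     "x < y * c \<longleftrightarrow> K * x < y * s" "y * c < x \<longleftrightarrow> y * s < K * x" for y
    using K by (simp_all add: Kc[symmetric] mult.left_commute)
  show ?thesis
  proof (intro conjI impI)
    assume "x \<le> - (3 + mu) * c \<or> x \<ge> (1 - mu) * c"
    hence "E \<le> - 2 * s \<or> E \<ge> 2 * s" unfolding E_def xK by (auto simp: algebra_simps)
    hence Eb: "\<bar>E\<bar> \<ge> 2 * s" using s by auto
    hence "D \<noteq> 0" using s B1 DE by auto
    have "\<bar>B1^3 / D\<bar> \<le> be" unfolding al be_def
      using Eb s B1 by (intro divide_left_mono) auto
    hence "max \<bar>B1^3 / D\<bar> \<bar>be\<bar> = be" using bepos by (simp add: max_def)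
    moreover have "2 * be = B1 / s" using s by (simp add: be_def)
    ultimately have "2 * max \<bar>B1^3 / D\<bar> \<bar>be\<bar> = B1 / s" by simp
    thus "norm A3 \<le> B1 / (2 * lam + mu)"
      using bound_core[OF nP nQ A3eq[OF \<open>D \<noteq> 0\<close>]] by (simp add: s_def)
  next
    assume "(- (3 + mu) * c \<le> x \<and> x < - (1 + mu) * c) \<or> (- (1 + mu) * c < x \<and> x \<le> (1 - mu) * c)"
    hence "(- 2 * s \<le> E \<and> E < 0) \<or> (0 < E \<and> E \<le> 2 * s)" unfolding E_def xK by (auto simp: algebra_simps)
    hence Eb: "\<bar>E\<bar> \<le> 2 * s" "E \<noteq> 0" by auto
    hence "D \<noteq> 0" using s B1 DE by auto
    have "be \<le> \<bar>B1^3 / D\<bar>" unfolding al be_def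
      using Eb s B1 by (intro divide_left_mono) auto
    hence "max \<bar>B1^3 / D\<bar> \<bar>be\<bar> = \<bar>B1^3 / D\<bar>" using bepos by (simp add: max_def)
    moreover have "\<bar>B1^3 / D\<bar> = B1^3 / \<bar>D\<bar>" using B1 by (simp add: abs_divide)
    ultimately have "2 * max \<bar>B1^3 / D\<bar> \<bar>be\<bar> = 2 * B1^3 / \<bar>D\<bar>" by simp
    thus "norm A3 \<le> 2 * B1 ^ 3 / \<bar>(2 * lam + mu) * (1 + mu) * B1 ^ 2 + 2 * (B1 - B2) * (lam + mu) ^ 2\<bar>"
      using bound_core[OF nP nQ A3eq[OF \<open>D \<noteq> 0\<close>]] by (simp add: D_def)
  qed
qed

theorem corollary3p2:
  fixes lam mu :: real and \<phi> f :: "complex \<Rightarrow> complex"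
  assumes "lam \<ge> 1" and "mu \<ge> 0"
    and "admissible_phi \<phi>"
    and "N_class mu lam \<phi> f"
  defines "B1 \<equiv> Re (taylor_coeff \<phi> 1)" and "B2 \<equiv> Re (taylor_coeff \<phi> 2)"
  defines "x \<equiv> (B1 - B2) / B1 ^ 2"
  defines "c \<equiv> (2 * lam + mu) / (2 * (lam + mu) ^ 2)"
  shows "(x \<le> - (3 + mu) * c \<or> x \<ge> (1 - mu) * c \<longrightarrow>
            norm (taylor_coeff f 3) \<le> B1 / (2 * lam + mu))
       \<and> ((- (3 + mu) * c \<le> x \<and> x < - (1 + mu) * c) \<or> (- (1 + mu) * c < x \<and> x \<le> (1 - mu) * c) \<longrightarrow>
            norm (taylor_coeff f 3) \<le>
              2 * B1 ^ 3 / \<bar>(2 * lam + mu) * (1 + mu) * B1 ^ 2 + 2 * (B1 - B2) * (lam + mu) ^ 2\<bar>)"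
proof -
  from assms(4) obtain g where bi: "bi_univalent_inverse f g"
    and sub: "\<And>g. bi_univalent_inverse f g \<Longrightarrow>
        subordinate (N_operator mu lam f) \<phi> \<and> subordinate (N_operator mu lam g) \<phi>"
    unfolding N_class_def bi_univalent_def by blast
  from bi have holf: "f holomorphic_on UD" and injf: "inj_on f UD" and f0: "f 0 = 0"
    and df0: "deriv f 0 = 1" and holg: "g holomorphic_on UD"
    and "\<exists>r>0. \<forall>w\<in>ball 0 r. g w \<in> UD \<and> f (g w) = w"
    unfolding bi_univalent_inverse_def normalized_univalent_def by blast+
  then obtain r where r: "r > 0" "\<And>w. w \<in> ball 0 r \<Longrightarrow> g w \<in> UD \<and> f (g w) = w" by blast
  have g0: "g 0 = 0"
  proof -
    have "g 0 \<in> UD" "f (g 0) = 0" using r by auto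
    thus ?thesis using injf f0 by (metis centre_in_ball inj_onD zero_less_one)
  qed
  from assms(3) have holp: "\<phi> holomorphic_on UD" and realp: "\<And>j. taylor_coeff \<phi> j \<in> \<real>"
    and B1pos: "Re (taylor_coeff \<phi> 1) > 0"
    unfolding admissible_phi_def by blast+
  have B1: "B1 > 0" using B1pos B1_def by simp
  define F where "F = fps_expansion f 0"
  define G where "G = fps_expansion g 0"
  define Ph where "Ph = fps_expansion \<phi> 0"
  have fF: "f has_fps_expansion F" unfolding F_def using holf by (intro has_fps_expansion_fps_expansion) auto
  have gG: "g has_fps_expansion G" unfolding G_def using holg by (intro has_fps_expansion_fps_expansion) auto
  have pP: "\<phi> has_fps_expansion Ph" unfolding Ph_def using holp by (intro has_fps_expansion_fps_expansion) auto
  have F0: "fps_nth F 0 = 0" using fps_nth_fps_expansion[OF fF, of 0] f0 by simp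
  have F1: "fps_nth F 1 = 1" using fps_nth_fps_expansion[OF fF, of 1] df0 by simp
  have G0: "fps_nth G 0 = 0" using fps_nth_fps_expansion[OF gG, of 0] g0 by simp
  have tcf: "taylor_coeff f n = fps_nth F n" for n
    unfolding taylor_coeff_def fps_nth_fps_expansion[OF fF] by simp
  have tcp: "taylor_coeff \<phi> n = fps_nth Ph n" for n
    unfolding taylor_coeff_def fps_nth_fps_expansion[OF pP] by simp
  have Ph1: "fps_nth Ph 1 = of_real B1"
    using realp[of 1] unfolding B1_def tcp by (auto simp: Reals_def)
  have Ph2: "fps_nth Ph 2 = of_real B2"
    using realp[of 2] unfolding B2_def tcp by (auto simp: Reals_def)
  have "(f \<circ> g) has_fps_expansion (F oo G)"
    by (rule has_fps_expansion_compose[OF fF gG G0])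
  moreover have "eventually (\<lambda>w. (f \<circ> g) w = w) (nhds 0)"
    using eventually_nhds_in_open[of "ball 0 r" 0] r by (auto elim!: eventually_mono)
  ultimately have "(\<lambda>w. w) has_fps_expansion (F oo G)" by (rule fps_exp_transfer)
  hence FG: "F oo G = fps_X" using has_fps_expansion_fps_X fps_exp_unique by blast
  have G1: "fps_nth G 1 = 1" using compose_nth123(1)[OF G0, of F] F1 FG by simp
  have G2: "fps_nth G 2 = - fps_nth F 2"
    using compose_nth123(2)[OF G0, of F] F1 G1 FG by (simp add: eq_neg_iff_add_eq_0 add.commute)
  have G3: "fps_nth G 3 = 2 * fps_nth F 2 ^ 2 - fps_nth F 3"
    using compose_nth123(3)[OF G0, of F] F1 G1 G2 FG by (simp add: algebra_simps power2_eq_square)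
  have subcoef: "\<exists>W. norm (fps_nth W 2) \<le> 1 - norm (fps_nth W 1) ^ 2 \<and>
      of_real (lam + mu) * fps_nth H 2 = of_real B1 * fps_nth W 1 \<and>
      of_real (2*lam + mu) * (fps_nth H 3 + of_real ((mu - 1)/2) * fps_nth H 2 ^ 2)
        = of_real B1 * fps_nth W 2 + of_real B2 * fps_nth W 1 ^ 2"
    if hH: "h has_fps_expansion H" and H0: "fps_nth H 0 = 0" and H1: "fps_nth H 1 = 1"
      and sb: "subordinate (N_operator mu lam h) \<phi>" for h H
  proof -
    from sb obtain w where holw: "w holomorphic_on UD" and wU: "w ` UD \<subseteq> UD" and w0: "w 0 = 0"
      and weq: "\<And>z. z \<in> UD \<Longrightarrow> N_operator mu lam h z = \<phi> (w z)"
      unfolding subordinate_def by blast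
    define W where "W = fps_expansion w 0"
    have wW: "w has_fps_expansion W" unfolding W_def using holw by (intro has_fps_expansion_fps_expansion) auto
    have W0: "fps_nth W 0 = 0" using fps_nth_fps_expansion[OF wW, of 0] w0 by simp
    obtain N where NE: "N_operator mu lam h has_fps_expansion N"
      and N1: "fps_nth N 1 = of_real (lam + mu) * fps_nth H 2"
      and N2: "fps_nth N 2 = of_real (2*lam + mu) * (fps_nth H 3 + of_real ((mu - 1)/2) * fps_nth H 2 ^ 2)"
      using N_expansion[OF hH H0 H1, of mu lam] by blast
    have "(\<phi> \<circ> w) has_fps_expansion (Ph oo W)"
      by (rule has_fps_expansion_compose[OF pP wW W0])
    moreover have "eventually (\<lambda>z. (\<phi> \<circ> w) z = N_operator mu lam h z) (nhds 0)"
      using eventually_nhds_in_open[of UD 0] by (auto elim!: eventually_mono simp: weq)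
    ultimately have "N_operator mu lam h has_fps_expansion (Ph oo W)" by (rule fps_exp_transfer)
    hence NW: "N = Ph oo W" using NE fps_exp_unique by blast
    show ?thesis
    proof (intro exI conjI)
      show "norm (fps_nth W 2) \<le> 1 - norm (fps_nth W 1) ^ 2"
        by (rule schwarz_pick_coeff[OF holw wU w0 wW])
      show "of_real (lam + mu) * fps_nth H 2 = of_real B1 * fps_nth W 1"
        using compose_nth123(1)[OF W0, of Ph] N1 NW Ph1 by simp
      show "of_real (2*lam + mu) * (fps_nth H 3 + of_real ((mu - 1)/2) * fps_nth H 2 ^ 2)
        = of_real B1 * fps_nth W 2 + of_real B2 * fps_nth W 1 ^ 2"
        using compose_nth123(2)[OF W0, of Ph] N2 NW Ph1 Ph2 by simp
    qed
  qed
  obtain W where nW: "norm (fps_nth W 2) \<le> 1 - norm (fps_nth W 1) ^ 2"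
    and E1: "of_real (lam + mu) * fps_nth F 2 = of_real B1 * fps_nth W 1"
    and E2: "of_real (2*lam + mu) * (fps_nth F 3 + of_real ((mu - 1)/2) * fps_nth F 2 ^ 2)
        = of_real B1 * fps_nth W 2 + of_real B2 * fps_nth W 1 ^ 2"
    using subcoef[OF fF F0 F1] sub[OF bi] by blast
  obtain V where nV: "norm (fps_nth V 2) \<le> 1 - norm (fps_nth V 1) ^ 2"
    and E3: "of_real (lam + mu) * fps_nth G 2 = of_real B1 * fps_nth V 1"
    and E4: "of_real (2*lam + mu) * (fps_nth G 3 + of_real ((mu - 1)/2) * fps_nth G 2 ^ 2)
        = of_real B1 * fps_nth V 2 + of_real B2 * fps_nth V 1 ^ 2"
    using subcoef[OF gG G0 G1] sub[OF bi] by blast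
  have "of_real B1 * fps_nth V 1 = of_real B1 * (- fps_nth W 1)"
    using E1 E3 G2 by (simp add: algebra_simps)
  moreover have "(of_real B1 :: complex) \<noteq> 0" using B1 by simp
  ultimately have V1: "fps_nth V 1 = - fps_nth W 1" by (metis mult_left_cancel)
  have E4': "of_real (2*lam + mu) * ((2 * fps_nth F 2 ^ 2 - fps_nth F 3) + of_real ((mu - 1)/2) * (- fps_nth F 2) ^ 2)
        = of_real B1 * fps_nth V 2 + of_real B2 * (- fps_nth W 1) ^ 2"
    using E4 G2 G3 V1 by simp
  have nV': "norm (fps_nth V 2) \<le> 1 - norm (fps_nth W 1) ^ 2" using nV V1 by simp
  show ?thesis
    unfolding x_def c_def tcf
    by (rule final_bound[OF assms(1,2) B1 E1 E2 E4' nW nV'])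
qed

end
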